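(* Let $G$ be a group and $\iota\in G$ an element for which there is a finite normal subgroup $L\lhd G$ such that the image of $\iota$ is central in $G/L$. Then the class of gr-odd $\mathbb{Q}[G]$-modules is closed under taking submodules, quotients, and extensions. The same holds for the class of gr-even $\mathbb{Q}[G]$-modules.
   Context: A $\mathbb{Q}[G]$-module $M$ is odd if $\iota\cdot m=-m$ for all $m\in M$, and even if $\iota\cdot m=m$ for all $m\in M$. $M$ is gr-odd (resp. gr-even) if it admits a finite filtration by $\mathbb{Q}[G]$-submodules $0=F_{-1}M\subseteq F_0M\subseteq\cdots\subseteq F_kM=M$ such that every quotient $F_{i+1}M/F_iM$ is odd (resp. even). *)

theory Defs
  imports Complex_Main "HOL-Algebra.Coset"
begin

definition QG_module ::
  "'g monoid \<Rightarrow> (rat \<Rightarrow> 'v::ab_group_add \<Rightarrow> 'v) \<Rightarrow> ('g \<Rightarrow> 'v \<Rightarrow> 'v) \<Rightarrow> 'v set \<Rightarrow> bool" where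
  "QG_module G sc act M \<longleftrightarrow>
     vector_space sc \<and> module.subspace sc M \<and>
     (\<forall>g\<in>carrier G. \<forall>x\<in>M. act g x \<in> M) \<and>
     (\<forall>g\<in>carrier G. \<forall>x\<in>M. \<forall>y\<in>M. act g (x + y) = act g x + act g y) \<and>
     (\<forall>g\<in>carrier G. \<forall>c. \<forall>x\<in>M. act g (sc c x) = sc c (act g x)) \<and>
     (\<forall>x\<in>M. act \<one>\<^bsub>G\<^esub> x = x) \<and>
     (\<forall>g\<in>carrier G. \<forall>h\<in>carrier G. \<forall>x\<in>M. act (g \<otimes>\<^bsub>G\<^esub> h) x = act g (act h x))"

definition QG_hom ::
  "'g monoid \<Rightarrow> (rat \<Rightarrow> 'v::ab_group_add \<Rightarrow> 'v) \<Rightarrow> ('g \<Rightarrow> 'v \<Rightarrow> 'v) \<Rightarrow> 'v set \<Rightarrow>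
   (rat \<Rightarrow> 'w::ab_group_add \<Rightarrow> 'w) \<Rightarrow> ('g \<Rightarrow> 'w \<Rightarrow> 'w) \<Rightarrow> 'w set \<Rightarrow> ('v \<Rightarrow> 'w) \<Rightarrow> bool" where
  "QG_hom G sc1 act1 M sc2 act2 P f \<longleftrightarrow>
     (\<forall>x\<in>M. f x \<in> P) \<and>
     (\<forall>x\<in>M. \<forall>y\<in>M. f (x + y) = f x + f y) \<and>
     (\<forall>c. \<forall>x\<in>M. f (sc1 c x) = sc2 c (f x)) \<and>
     (\<forall>g\<in>carrier G. \<forall>x\<in>M. f (act1 g x) = act2 g (f x))"

text \<open>The quotient B/A (A \<subseteq> B submodules) is odd, i.e. iota [m] = -[m] in B/A,
  i.e. iota m + m \<in> A for all m \<in> B; resp. even: iota m - m \<in> A.\<close>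
definition odd_quot :: "('g \<Rightarrow> 'v \<Rightarrow> 'v) \<Rightarrow> 'g \<Rightarrow> 'v::ab_group_add set \<Rightarrow> 'v set \<Rightarrow> bool" where
  "odd_quot act \<iota> A B \<longleftrightarrow> (\<forall>m\<in>B. act \<iota> m + m \<in> A)"

definition even_quot :: "('g \<Rightarrow> 'v \<Rightarrow> 'v) \<Rightarrow> 'g \<Rightarrow> 'v::ab_group_add set \<Rightarrow> 'v set \<Rightarrow> bool" where
  "even_quot act \<iota> A B \<longleftrightarrow> (\<forall>m\<in>B. act \<iota> m - m \<in> A)"

text \<open>gr-odd / gr-even: a finite filtration 0 = F 0 \<subseteq> F 1 \<subseteq> ... \<subseteq> F k = M by
  Q[G]-submodules with all successive quotients odd (resp. even).
  (Index shifted by one relative to the paper: F i here is F_{i-1} there.)\<close>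
definition gr_odd ::
  "'g monoid \<Rightarrow> (rat \<Rightarrow> 'v::ab_group_add \<Rightarrow> 'v) \<Rightarrow> ('g \<Rightarrow> 'v \<Rightarrow> 'v) \<Rightarrow> 'g \<Rightarrow> 'v set \<Rightarrow> bool" where
  "gr_odd G sc act \<iota> M \<longleftrightarrow> QG_module G sc act M \<and>
     (\<exists>(k::nat) (F::nat \<Rightarrow> 'v set). F 0 = {0} \<and> F k = M \<and>
        (\<forall>i\<le>k. QG_module G sc act (F i)) \<and>
        (\<forall>i<k. F i \<subseteq> F (Suc i) \<and> odd_quot act \<iota> (F i) (F (Suc i))))"

definition gr_even ::
  "'g monoid \<Rightarrow> (rat \<Rightarrow> 'v::ab_group_add \<Rightarrow> 'v) \<Rightarrow> ('g \<Rightarrow> 'v \<Rightarrow> 'v) \<Rightarrow> 'g \<Rightarrow> 'v set \<Rightarrow> bool" where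
  "gr_even G sc act \<iota> M \<longleftrightarrow> QG_module G sc act M \<and>
     (\<exists>(k::nat) (F::nat \<Rightarrow> 'v set). F 0 = {0} \<and> F k = M \<and>
        (\<forall>i\<le>k. QG_module G sc act (F i)) \<and>
        (\<forall>i<k. F i \<subseteq> F (Suc i) \<and> even_quot act \<iota> (F i) (F (Suc i))))"

end

theory Submission
  imports Defs
begin

lemma vs_mod: "vector_space sc \<Longrightarrow> module sc"
  by (simp add: vector_space_def module_def)

lemma sub_iff: "vector_space sc \<Longrightarrow> module.subspace sc M \<longleftrightarrow>
   (0 \<in> M \<and> (\<forall>x\<in>M. \<forall>y\<in>M. x + y \<in> M) \<and> (\<forall>c. \<forall>x\<in>M. sc c x \<in> M))"
  by (rule module.subspace_def[OF vs_mod])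

lemma QG_moduleD:
  assumes "QG_module G sc act M"
  shows "vector_space sc" "module.subspace sc M" "\<And>g x. g \<in> carrier G \<Longrightarrow> x \<in> M \<Longrightarrow> act g x \<in> M"
   "\<And>g x y. g \<in> carrier G \<Longrightarrow> x \<in> M \<Longrightarrow> y \<in> M \<Longrightarrow> act g (x + y) = act g x + act g y"
   "\<And>g c x. g \<in> carrier G \<Longrightarrow> x \<in> M \<Longrightarrow> act g (sc c x) = sc c (act g x)"
   "\<And>x. x \<in> M \<Longrightarrow> act \<one>\<^bsub>G\<^esub> x = x"
   "\<And>g h x. g \<in> carrier G \<Longrightarrow> h \<in> carrier G \<Longrightarrow> x \<in> M \<Longrightarrow> act (g \<otimes>\<^bsub>G\<^esub> h) x = act g (act h x)"
  using assms unfolding QG_module_def by simp_all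

lemma QG_homD:
  assumes "QG_hom G sc1 act1 M sc2 act2 P f"
  shows "\<And>x. x \<in> M \<Longrightarrow> f x \<in> P"
   "\<And>x y. x \<in> M \<Longrightarrow> y \<in> M \<Longrightarrow> f (x + y) = f x + f y"
   "\<And>c x. x \<in> M \<Longrightarrow> f (sc1 c x) = sc2 c (f x)"
   "\<And>g x. g \<in> carrier G \<Longrightarrow> x \<in> M \<Longrightarrow> f (act1 g x) = act2 g (f x)"
  using assms unfolding QG_hom_def by simp_all

lemma QG_facts:
  assumes "QG_module G sc act M"
  shows "0 \<in> M" "x \<in> M \<Longrightarrow> y \<in> M \<Longrightarrow> x + y \<in> M" "x \<in> M \<Longrightarrow> sc c x \<in> M"
    "x \<in> M \<Longrightarrow> y \<in> M \<Longrightarrow> x - y \<in> M" "g \<in> carrier G \<Longrightarrow> x \<in> M \<Longrightarrow> act g x \<in> M"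
proof -
  note vs = QG_moduleD(1)[OF assms] and ss = QG_moduleD(2)[OF assms]
  have s: "0 \<in> M \<and> (\<forall>x\<in>M. \<forall>y\<in>M. x + y \<in> M) \<and> (\<forall>c. \<forall>x\<in>M. sc c x \<in> M)"
    using ss sub_iff[OF vs] by simp
  show "0 \<in> M" using s by simp
  show "x \<in> M \<Longrightarrow> y \<in> M \<Longrightarrow> x + y \<in> M" using s by simp
  show "x \<in> M \<Longrightarrow> sc c x \<in> M" using s by simp
  show "x \<in> M \<Longrightarrow> y \<in> M \<Longrightarrow> x - y \<in> M" by (rule module.subspace_diff[OF vs_mod[OF vs] ss])
  show "g \<in> carrier G \<Longrightarrow> x \<in> M \<Longrightarrow> act g x \<in> M" by (rule QG_moduleD(3)[OF assms])
qed

lemma QG_sub: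
  assumes "QG_module G sc act M0" "A \<subseteq> M0" "0 \<in> A"
    "\<And>x y. x \<in> A \<Longrightarrow> y \<in> A \<Longrightarrow> x + y \<in> A" "\<And>c x. x \<in> A \<Longrightarrow> sc c x \<in> A"
    "\<And>g x. g \<in> carrier G \<Longrightarrow> x \<in> A \<Longrightarrow> act g x \<in> A"
  shows "QG_module G sc act A"
proof -
  note vs = QG_moduleD(1)[OF assms(1)]
  have ss: "module.subspace sc A" unfolding sub_iff[OF vs]
    by (intro conjI ballI allI assms(3) assms(4) assms(5))
  have sub: "\<And>x. x \<in> A \<Longrightarrow> x \<in> M0" using assms(2) by blast
  note a1 = QG_moduleD(4)[OF assms(1)] and a2 = QG_moduleD(5)[OF assms(1)]
   and a3 = QG_moduleD(6)[OF assms(1)] and a4 = QG_moduleD(7)[OF assms(1)]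
  have c3: "\<forall>g\<in>carrier G. \<forall>x\<in>A. act g x \<in> A"
    by (intro ballI) (rule assms(6))
  have c4: "\<forall>g\<in>carrier G. \<forall>x\<in>A. \<forall>y\<in>A. act g (x + y) = act g x + act g y"
    by (intro ballI) (rule a1, assumption, erule sub, erule sub)
  have c5: "\<forall>g\<in>carrier G. \<forall>c. \<forall>x\<in>A. act g (sc c x) = sc c (act g x)"
    by (intro ballI allI) (rule a2, assumption, erule sub)
  have c6: "\<forall>x\<in>A. act \<one>\<^bsub>G\<^esub> x = x"
    by (intro ballI) (rule a3, erule sub)
  have c7: "\<forall>g\<in>carrier G. \<forall>h\<in>carrier G. \<forall>x\<in>A. act (g \<otimes>\<^bsub>G\<^esub> h) x = act g (act h x)"
    by (intro ballI) (rule a4, assumption, assumption, erule sub)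
  show ?thesis unfolding QG_module_def
    by (intro conjI vs ss c3 c4 c5 c6 c7)
qed

lemma QG_Int: assumes "QG_module G sc act A" "QG_module G sc act B"
  shows "QG_module G sc act (A \<inter> B)"
proof (rule QG_sub[OF assms(1)])
  note a = QG_facts[OF assms(1)] and b = QG_facts[OF assms(2)]
  show "A \<inter> B \<subseteq> A" by blast
  show "0 \<in> A \<inter> B" using a(1) b(1) by blast
  show "x + y \<in> A \<inter> B" if "x \<in> A \<inter> B" "y \<in> A \<inter> B" for x y
    using a(2) b(2) that by blast
  show "sc c x \<in> A \<inter> B" if "x \<in> A \<inter> B" for c x
    using a(3) b(3) that by blast
  show "act g x \<in> A \<inter> B" if "g \<in> carrier G" "x \<in> A \<inter> B" for g x
    using a(5) b(5) that by blast
qed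

lemma hom_zero: assumes "QG_module G sc1 act1 M" "QG_hom G sc1 act1 M sc2 act2 P f"
  shows "f 0 = 0"
proof -
  have "f (0 + 0) = f 0 + f 0" by (rule QG_homD(2)[OF assms(2)]) (use QG_facts(1)[OF assms(1)] in auto)
  thus ?thesis by simp
qed

lemma hom_add: assumes "QG_module G sc1 act1 M" "QG_hom G sc1 act1 M sc2 act2 P f" "x \<in> M" "y \<in> M"
  shows "f (x + y) = f x + f y"
  by (rule QG_homD(2)[OF assms(2) assms(3,4)])

lemma hom_diff: assumes "QG_module G sc1 act1 M" "QG_hom G sc1 act1 M sc2 act2 P f" "x \<in> M" "y \<in> M"
  shows "f (x - y) = f x - f y"
proof -
  have "f ((x - y) + y) = f (x - y) + f y"
    by (rule QG_homD(2)[OF assms(2)]) (use QG_facts(4)[OF assms(1)] assms(3,4) in auto)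
  then have "f x = f (x - y) + f y" by simp
  then show ?thesis by (metis add_diff_cancel)
qed

lemma QG_image:
  assumes "QG_module G sc1 act1 A" "A \<subseteq> M" "QG_module G sc2 act2 P" "QG_hom G sc1 act1 M sc2 act2 P f"
  shows "QG_module G sc2 act2 (f ` A)"
proof (rule QG_sub[OF assms(3)])
  note inP = QG_homD(1)[OF assms(4)] and faddM = QG_homD(2)[OF assms(4)]
   and fscM = QG_homD(3)[OF assms(4)] and factM = QG_homD(4)[OF assms(4)]
  have AM: "\<And>x. x \<in> A \<Longrightarrow> x \<in> M" using assms(2) by blast
  have fadd: "\<And>x y. x \<in> A \<Longrightarrow> y \<in> A \<Longrightarrow> f (x + y) = f x + f y"
    by (rule faddM; rule AM)
  have fsc: "\<And>c x. x \<in> A \<Longrightarrow> f (sc1 c x) = sc2 c (f x)"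
    by (rule fscM; rule AM)
  have fact: "\<And>g x. g \<in> carrier G \<Longrightarrow> x \<in> A \<Longrightarrow> f (act1 g x) = act2 g (f x)"
    by (rule factM; (rule AM)?)
  have z: "f 0 = 0" using fadd[of 0 0] QG_facts(1)[OF assms(1)] by simp
  show "f ` A \<subseteq> P" using inP AM by blast
  show "0 \<in> f ` A" using z QG_facts(1)[OF assms(1)] by force
  show "x + y \<in> f ` A" if h: "x \<in> f ` A" "y \<in> f ` A" for x y
  proof -
    obtain a b where ab: "a \<in> A" "b \<in> A" "x = f a" "y = f b" using h by blast
    then have "x + y = f (a + b)" using fadd by simp
    moreover have "a + b \<in> A" using ab QG_facts(2)[OF assms(1)] by simp
    ultimately show ?thesis by (rule image_eqI)
  qed
  show "sc2 c x \<in> f ` A" if h: "x \<in> f ` A" for c x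
  proof -
    obtain a where ab: "a \<in> A" "x = f a" using h by blast
    then have "sc2 c x = f (sc1 c a)" using fsc by simp
    moreover have "sc1 c a \<in> A" using ab QG_facts(3)[OF assms(1)] by simp
    ultimately show ?thesis by (rule image_eqI)
  qed
  show "act2 g x \<in> f ` A" if h: "g \<in> carrier G" "x \<in> f ` A" for g x
  proof -
    obtain a where ab: "a \<in> A" "x = f a" using h by blast
    then have "act2 g x = f (act1 g a)" using fact h by simp
    moreover have "act1 g a \<in> A" using ab h QG_facts(5)[OF assms(1)] by simp
    ultimately show ?thesis by (rule image_eqI)
  qed
qed

lemma QG_vimage:
  assumes "QG_module G sc1 act1 M" "QG_module G sc2 act2 H" "QG_hom G sc1 act1 M sc2 act2 P f"
  shows "QG_module G sc1 act1 {m \<in> M. f m \<in> H}"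
proof -
  note faddM = QG_homD(2)[OF assms(3)]
   and fscM = QG_homD(3)[OF assms(3)] and factM = QG_homD(4)[OF assms(3)]
  note M = QG_facts[OF assms(1)] and H = QG_facts[OF assms(2)]
  show ?thesis
  proof (rule QG_sub[OF assms(1)])
    show "0 \<in> {m \<in> M. f m \<in> H}" using hom_zero[OF assms(1,3)] M(1) H(1) by simp
    show "x + y \<in> {m \<in> M. f m \<in> H}" if h: "x \<in> {m \<in> M. f m \<in> H}" "y \<in> {m \<in> M. f m \<in> H}" for x y
    proof -
      have "x \<in> M" "y \<in> M" "f x \<in> H" "f y \<in> H" using h by auto
      then show ?thesis using faddM M(2) H(2) by simp
    qed
    show "sc1 c x \<in> {m \<in> M. f m \<in> H}" if h: "x \<in> {m \<in> M. f m \<in> H}" for c x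
    proof -
      have "x \<in> M" "f x \<in> H" using h by auto
      then show ?thesis using fscM M(3) H(3) by simp
    qed
    show "act1 g x \<in> {m \<in> M. f m \<in> H}" if h: "g \<in> carrier G" "x \<in> {m \<in> M. f m \<in> H}" for g x
    proof -
      have "x \<in> M" "f x \<in> H" using h by auto
      then show ?thesis using factM M(5) H(5) h(1) by simp
    qed
    show "{m \<in> M. f m \<in> H} \<subseteq> M" by blast
  qed
qed

lemma chain_mono_aux:
  fixes F :: "nat \<Rightarrow> 'a set"
  assumes "\<forall>i<k. F i \<subseteq> F (Suc i)"
  shows "i + d \<le> k \<Longrightarrow> F i \<subseteq> F (i + d)"
proof (induction d)
  case 0 thus ?case by simp
next
  case (Suc d)
  then have "F i \<subseteq> F (i + d)" by simp
  moreover have "F (i + d) \<subseteq> F (Suc (i + d))" using assms Suc.prems by simp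
  ultimately show ?case by simp
qed

lemma chain_mono:
  fixes F :: "nat \<Rightarrow> 'a set"
  assumes "\<forall>i<k. F i \<subseteq> F (Suc i)" "i \<le> j" "j \<le> k"
  shows "F i \<subseteq> F j"
  using chain_mono_aux[OF assms(1), of i "j - i"] assms(2,3) by simp

lemma gr_oddI:
  assumes "QG_module G sc act M" "F 0 = {0}" "F k = M"
    "\<And>i. i \<le> k \<Longrightarrow> QG_module G sc act (F i)"
    "\<And>i. i < k \<Longrightarrow> F i \<subseteq> F (Suc i)"
    "\<And>i m. i < k \<Longrightarrow> m \<in> F (Suc i) \<Longrightarrow> act \<iota> m + m \<in> F i"
  shows "gr_odd G sc act \<iota> M"
  unfolding gr_odd_def odd_quot_def
  apply (rule conjI, rule assms(1))
  apply (rule exI[of _ k], rule exI[of _ F])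
  apply (intro conjI allI impI ballI assms(2,3) assms(4) assms(5) assms(6))
       apply assumption+
  done

lemma gr_oddE:
  assumes "gr_odd G sc act \<iota> M"
  obtains F k where "QG_module G sc act M" "F 0 = {0}" "F k = M"
    "\<And>i. i \<le> k \<Longrightarrow> QG_module G sc act (F i)"
    "\<And>i. i < k \<Longrightarrow> F i \<subseteq> F (Suc i)"
    "\<And>i m. i < k \<Longrightarrow> m \<in> F (Suc i) \<Longrightarrow> act \<iota> m + m \<in> F i"
proof -
  have "QG_module G sc act M" using assms unfolding gr_odd_def by simp
  moreover obtain k F where "F 0 = {0}" "F k = M" "\<forall>i\<le>k. QG_module G sc act (F i)"
    "\<forall>i<k. F i \<subseteq> F (Suc i) \<and> odd_quot act \<iota> (F i) (F (Suc i))"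
    using assms unfolding gr_odd_def by metis
  ultimately show ?thesis using that unfolding odd_quot_def by simp
qed

lemma sub_odd:
  assumes "\<iota> \<in> carrier G" "gr_odd G sc act \<iota> M" "N \<subseteq> M" "QG_module G sc act N"
  shows "gr_odd G sc act \<iota> N"
proof -
  obtain k F where "QG_module G sc act M" and F0: "F 0 = {0}" and Fk: "F k = M"
    and Fmod: "\<And>i. i \<le> k \<Longrightarrow> QG_module G sc act (F i)"
    and Finc: "\<And>i. i < k \<Longrightarrow> F i \<subseteq> F (Suc i)"
    and Fodd: "\<And>i m. i < k \<Longrightarrow> m \<in> F (Suc i) \<Longrightarrow> act \<iota> m + m \<in> F i"
    using gr_oddE[OF assms(2)] by blast
  note Nf = QG_facts[OF assms(4)]
  show ?thesis
  proof (rule gr_oddI[where k=k and F="\<lambda>i. F i \<inter> N"])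
    show "QG_module G sc act N" by fact
    show "F 0 \<inter> N = {0}" using F0 Nf(1) by auto
    show "F k \<inter> N = N" using Fk assms(3) by auto
    show "QG_module G sc act (F i \<inter> N)" if "i \<le> k" for i
      by (rule QG_Int[OF Fmod[OF that] assms(4)])
    show "F i \<inter> N \<subseteq> F (Suc i) \<inter> N" if "i < k" for i
      using Finc[OF that] by auto
    show "act \<iota> m + m \<in> F i \<inter> N" if h: "i < k" "m \<in> F (Suc i) \<inter> N" for i m
    proof -
      have "m \<in> N" "m \<in> F (Suc i)" using h by auto
      then have "act \<iota> m + m \<in> N" "act \<iota> m + m \<in> F i"
        using Nf(2)[OF Nf(5)[OF assms(1)]] Fodd[OF h(1)] by auto
      then show ?thesis by simp
    qed
  qed
qed

lemma quot_odd:
  assumes "\<iota> \<in> carrier G" "gr_odd G sc1 act1 \<iota> M" "QG_module G sc2 act2 P"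
    "QG_hom G sc1 act1 M sc2 act2 P f" "f ` M = P"
  shows "gr_odd G sc2 act2 \<iota> P"
proof -
  obtain k F where MM: "QG_module G sc1 act1 M" and F0: "F 0 = {0}" and Fk: "F k = M"
    and Fmod: "\<And>i. i \<le> k \<Longrightarrow> QG_module G sc1 act1 (F i)"
    and Finc: "\<And>i. i < k \<Longrightarrow> F i \<subseteq> F (Suc i)"
    and Fodd: "\<And>i m. i < k \<Longrightarrow> m \<in> F (Suc i) \<Longrightarrow> act1 \<iota> m + m \<in> F i"
    using gr_oddE[OF assms(2)] by blast
  have Fsub: "F i \<subseteq> M" if "i \<le> k" for i
    using chain_mono[of k F i k] Finc that Fk by auto
  note Mf = QG_facts[OF MM]
  show ?thesis
  proof (rule gr_oddI[where k=k and F="\<lambda>i. f ` F i"])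
    show "QG_module G sc2 act2 P" by fact
    show "f ` F 0 = {0}" using F0 hom_zero[OF MM assms(4)] by simp
    show "f ` F k = P" using Fk assms(5) by simp
    show "QG_module G sc2 act2 (f ` F i)" if "i \<le> k" for i
      by (rule QG_image[OF Fmod[OF that] Fsub[OF that] assms(3,4)])
    show "f ` F i \<subseteq> f ` F (Suc i)" if "i < k" for i
      using Finc[OF that] by (rule image_mono)
    show "act2 \<iota> y + y \<in> f ` F i" if h: "i < k" "y \<in> f ` F (Suc i)" for i y
    proof -
      obtain a where a: "a \<in> F (Suc i)" "y = f a" using h(2) by blast
      have aM: "a \<in> M" using a(1) Fsub[of "Suc i"] h(1) by auto
      have "act2 \<iota> y + y = f (act1 \<iota> a + a)"
        using a(2) hom_add[OF MM assms(4) Mf(5)[OF assms(1) aM] aM] QG_homD(4)[OF assms(4) assms(1) aM]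
        by simp
      moreover have "act1 \<iota> a + a \<in> F i" by (rule Fodd[OF h(1) a(1)])
      ultimately show ?thesis by (rule image_eqI)
    qed
  qed
qed

lemma ext_odd:
  assumes iota: "\<iota> \<in> carrier G" and NN: "QG_module G scN actN N" and MM: "QG_module G scM actM M"
    and PP: "QG_module G scP actP P"
    and hi: "QG_hom G scN actN N scM actM M i" and hp: "QG_hom G scM actM M scP actP P p"
    and surj: "p ` M = P" and ker: "i ` N = {m \<in> M. p m = 0}"
    and oN: "gr_odd G scN actN \<iota> N" and oP: "gr_odd G scP actP \<iota> P"
  shows "gr_odd G scM actM \<iota> M"
proof -
  obtain a F where "QG_module G scN actN N" and F0: "F 0 = {0}" and Fk: "F a = N"
    and Fmod: "\<And>j. j \<le> a \<Longrightarrow> QG_module G scN actN (F j)"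
    and Finc: "\<And>j. j < a \<Longrightarrow> F j \<subseteq> F (Suc j)"
    and Fodd: "\<And>j m. j < a \<Longrightarrow> m \<in> F (Suc j) \<Longrightarrow> actN \<iota> m + m \<in> F j"
    using gr_oddE[OF oN] by blast
  obtain b H where "QG_module G scP actP P" and H0: "H 0 = {0}" and Hk: "H b = P"
    and Hmod: "\<And>j. j \<le> b \<Longrightarrow> QG_module G scP actP (H j)"
    and Hinc: "\<And>j. j < b \<Longrightarrow> H j \<subseteq> H (Suc j)"
    and Hodd: "\<And>j m. j < b \<Longrightarrow> m \<in> H (Suc j) \<Longrightarrow> actP \<iota> m + m \<in> H j"
    using gr_oddE[OF oP] by blast
  have Fsub: "F j \<subseteq> N" if "j \<le> a" for j
    using chain_mono[of a F j a] Finc that Fk by auto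
  note Nf = QG_facts[OF NN] and Mf = QG_facts[OF MM] and Pf = QG_facts[OF PP]
  define E where "E j = (if j \<le> a then i ` F j else {m \<in> M. p m \<in> H (j - a)})" for j
  have Elow: "j \<le> a \<Longrightarrow> E j = i ` F j" for j by (simp add: E_def)
  have Ehigh: "E j = {m \<in> M. p m \<in> H (j - a)}" if "a \<le> j" for j
  proof (cases "j = a")
    case True
    then have "E j = i ` N" using Fk by (simp add: E_def)
    also have "\<dots> = {m \<in> M. p m \<in> H (j - a)}" using ker H0 True by simp
    finally show ?thesis .
  next
    case False
    then show ?thesis using that by (simp add: E_def)
  qed
  show ?thesis
  proof (rule gr_oddI[where k="a + b" and F=E])
    show "QG_module G scM actM M" by (rule MM)
    show "E 0 = {0}" using Elow[of 0] F0 hom_zero[OF NN hi] by simp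
    show "E (a + b) = M" using Ehigh[of "a + b"] Hk QG_homD(1)[OF hp] by auto
    show "QG_module G scM actM (E j)" if "j \<le> a + b" for j
    proof (cases "j \<le> a")
      case True
      then show ?thesis using Elow[OF True] QG_image[OF Fmod[OF True] Fsub[OF True] MM hi] by simp
    next
      case False
      then have "j - a \<le> b" using that by simp
      then show ?thesis using Ehigh[of j] False QG_vimage[OF MM Hmod hp] by simp
    qed
    show "E j \<subseteq> E (Suc j)" if "j < a + b" for j
    proof (cases "Suc j \<le> a")
      case True
      then show ?thesis using Elow[of j] Elow[of "Suc j"] Finc[of j] by auto
    next
      case False
      then have "a \<le> j" "j - a < b" "Suc j - a = Suc (j - a)" using that by auto
      then show ?thesis using Ehigh[of j] Ehigh[of "Suc j"] Hinc[of "j - a"] by auto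
    qed
    show "actM \<iota> m + m \<in> E j" if h: "j < a + b" "m \<in> E (Suc j)" for j m
    proof (cases "Suc j \<le> a")
      case True
      then have j: "j < a" by simp
      obtain n where n: "n \<in> F (Suc j)" "m = i n" using h(2) Elow[OF True] by auto
      have nN: "n \<in> N" using n(1) Fsub[OF True] by auto
      have "actM \<iota> m + m = i (actN \<iota> n + n)"
        using n(2) hom_add[OF NN hi Nf(5)[OF iota nN] nN] QG_homD(4)[OF hi iota nN] by simp
      moreover have "actN \<iota> n + n \<in> F j" by (rule Fodd[OF j n(1)])
      ultimately show ?thesis using Elow[of j] j by simp
    next
      case False
      then have aj: "a \<le> j" and jb: "j - a < b" and sj: "Suc j - a = Suc (j - a)" using h(1) by auto
      have m: "m \<in> M" "p m \<in> H (Suc (j - a))" using h(2) Ehigh[of "Suc j"] aj sj by auto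
      have "p (actM \<iota> m + m) = actP \<iota> (p m) + p m"
        using hom_add[OF MM hp Mf(5)[OF iota m(1)] m(1)] QG_homD(4)[OF hp iota m(1)] by simp
      moreover have "actP \<iota> (p m) + p m \<in> H (j - a)" by (rule Hodd[OF jb m(2)])
      moreover have "actM \<iota> m + m \<in> M" using Mf(2)[OF Mf(5)[OF iota m(1)] m(1)] .
      ultimately show ?thesis using Ehigh[OF aj] by simp
    qed
  qed
qed

lemma gr_evenI:
  assumes "QG_module G sc act M" "F 0 = {0}" "F k = M"
    "\<And>i. i \<le> k \<Longrightarrow> QG_module G sc act (F i)"
    "\<And>i. i < k \<Longrightarrow> F i \<subseteq> F (Suc i)"
    "\<And>i m. i < k \<Longrightarrow> m \<in> F (Suc i) \<Longrightarrow> act \<iota> m - m \<in> F i"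
  shows "gr_even G sc act \<iota> M"
  unfolding gr_even_def even_quot_def
  apply (rule conjI, rule assms(1))
  apply (rule exI[of _ k], rule exI[of _ F])
  apply (intro conjI allI impI ballI assms(2,3) assms(4) assms(5) assms(6))
       apply assumption+
  done

lemma gr_evenE:
  assumes "gr_even G sc act \<iota> M"
  obtains F k where "QG_module G sc act M" "F 0 = {0}" "F k = M"
    "\<And>i. i \<le> k \<Longrightarrow> QG_module G sc act (F i)"
    "\<And>i. i < k \<Longrightarrow> F i \<subseteq> F (Suc i)"
    "\<And>i m. i < k \<Longrightarrow> m \<in> F (Suc i) \<Longrightarrow> act \<iota> m - m \<in> F i"
proof -
  have "QG_module G sc act M" using assms unfolding gr_even_def by simp
  moreover obtain k F where "F 0 = {0}" "F k = M" "\<forall>i\<le>k. QG_module G sc act (F i)"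
    "\<forall>i<k. F i \<subseteq> F (Suc i) \<and> even_quot act \<iota> (F i) (F (Suc i))"
    using assms unfolding gr_even_def by metis
  ultimately show ?thesis using that unfolding even_quot_def by simp
qed

lemma sub_even:
  assumes "\<iota> \<in> carrier G" "gr_even G sc act \<iota> M" "N \<subseteq> M" "QG_module G sc act N"
  shows "gr_even G sc act \<iota> N"
proof -
  obtain k F where "QG_module G sc act M" and F0: "F 0 = {0}" and Fk: "F k = M"
    and Fmod: "\<And>i. i \<le> k \<Longrightarrow> QG_module G sc act (F i)"
    and Finc: "\<And>i. i < k \<Longrightarrow> F i \<subseteq> F (Suc i)"
    and Fodd: "\<And>i m. i < k \<Longrightarrow> m \<in> F (Suc i) \<Longrightarrow> act \<iota> m - m \<in> F i"
    using gr_evenE[OF assms(2)] by blast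
  note Nf = QG_facts[OF assms(4)]
  show ?thesis
  proof (rule gr_evenI[where k=k and F="\<lambda>i. F i \<inter> N"])
    show "QG_module G sc act N" by fact
    show "F 0 \<inter> N = {0}" using F0 Nf(1) by auto
    show "F k \<inter> N = N" using Fk assms(3) by auto
    show "QG_module G sc act (F i \<inter> N)" if "i \<le> k" for i
      by (rule QG_Int[OF Fmod[OF that] assms(4)])
    show "F i \<inter> N \<subseteq> F (Suc i) \<inter> N" if "i < k" for i
      using Finc[OF that] by auto
    show "act \<iota> m - m \<in> F i \<inter> N" if h: "i < k" "m \<in> F (Suc i) \<inter> N" for i m
    proof -
      have "m \<in> N" "m \<in> F (Suc i)" using h by auto
      then have "act \<iota> m - m \<in> N" "act \<iota> m - m \<in> F i"
        using Nf(4)[OF Nf(5)[OF assms(1)]] Fodd[OF h(1)] by auto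
      then show ?thesis by simp
    qed
  qed
qed

lemma quot_even:
  assumes "\<iota> \<in> carrier G" "gr_even G sc1 act1 \<iota> M" "QG_module G sc2 act2 P"
    "QG_hom G sc1 act1 M sc2 act2 P f" "f ` M = P"
  shows "gr_even G sc2 act2 \<iota> P"
proof -
  obtain k F where MM: "QG_module G sc1 act1 M" and F0: "F 0 = {0}" and Fk: "F k = M"
    and Fmod: "\<And>i. i \<le> k \<Longrightarrow> QG_module G sc1 act1 (F i)"
    and Finc: "\<And>i. i < k \<Longrightarrow> F i \<subseteq> F (Suc i)"
    and Fodd: "\<And>i m. i < k \<Longrightarrow> m \<in> F (Suc i) \<Longrightarrow> act1 \<iota> m - m \<in> F i"
    using gr_evenE[OF assms(2)] by blast
  have Fsub: "F i \<subseteq> M" if "i \<le> k" for i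
    using chain_mono[of k F i k] Finc that Fk by auto
  note Mf = QG_facts[OF MM]
  show ?thesis
  proof (rule gr_evenI[where k=k and F="\<lambda>i. f ` F i"])
    show "QG_module G sc2 act2 P" by fact
    show "f ` F 0 = {0}" using F0 hom_zero[OF MM assms(4)] by simp
    show "f ` F k = P" using Fk assms(5) by simp
    show "QG_module G sc2 act2 (f ` F i)" if "i \<le> k" for i
      by (rule QG_image[OF Fmod[OF that] Fsub[OF that] assms(3,4)])
    show "f ` F i \<subseteq> f ` F (Suc i)" if "i < k" for i
      using Finc[OF that] by (rule image_mono)
    show "act2 \<iota> y - y \<in> f ` F i" if h: "i < k" "y \<in> f ` F (Suc i)" for i y
    proof -
      obtain a where a: "a \<in> F (Suc i)" "y = f a" using h(2) by blast
      have aM: "a \<in> M" using a(1) Fsub[of "Suc i"] h(1) by auto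
      have "act2 \<iota> y - y = f (act1 \<iota> a - a)"
        using a(2) hom_diff[OF MM assms(4) Mf(5)[OF assms(1) aM] aM] QG_homD(4)[OF assms(4) assms(1) aM]
        by simp
      moreover have "act1 \<iota> a - a \<in> F i" by (rule Fodd[OF h(1) a(1)])
      ultimately show ?thesis by (rule image_eqI)
    qed
  qed
qed

lemma ext_even:
  assumes iota: "\<iota> \<in> carrier G" and NN: "QG_module G scN actN N" and MM: "QG_module G scM actM M"
    and PP: "QG_module G scP actP P"
    and hi: "QG_hom G scN actN N scM actM M i" and hp: "QG_hom G scM actM M scP actP P p"
    and surj: "p ` M = P" and ker: "i ` N = {m \<in> M. p m = 0}"
    and oN: "gr_even G scN actN \<iota> N" and oP: "gr_even G scP actP \<iota> P"
  shows "gr_even G scM actM \<iota> M"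
proof -
  obtain a F where "QG_module G scN actN N" and F0: "F 0 = {0}" and Fk: "F a = N"
    and Fmod: "\<And>j. j \<le> a \<Longrightarrow> QG_module G scN actN (F j)"
    and Finc: "\<And>j. j < a \<Longrightarrow> F j \<subseteq> F (Suc j)"
    and Fodd: "\<And>j m. j < a \<Longrightarrow> m \<in> F (Suc j) \<Longrightarrow> actN \<iota> m - m \<in> F j"
    using gr_evenE[OF oN] by blast
  obtain b H where "QG_module G scP actP P" and H0: "H 0 = {0}" and Hk: "H b = P"
    and Hmod: "\<And>j. j \<le> b \<Longrightarrow> QG_module G scP actP (H j)"
    and Hinc: "\<And>j. j < b \<Longrightarrow> H j \<subseteq> H (Suc j)"
    and Hodd: "\<And>j m. j < b \<Longrightarrow> m \<in> H (Suc j) \<Longrightarrow> actP \<iota> m - m \<in> H j"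
    using gr_evenE[OF oP] by blast
  have Fsub: "F j \<subseteq> N" if "j \<le> a" for j
    using chain_mono[of a F j a] Finc that Fk by auto
  note Nf = QG_facts[OF NN] and Mf = QG_facts[OF MM] and Pf = QG_facts[OF PP]
  define E where "E j = (if j \<le> a then i ` F j else {m \<in> M. p m \<in> H (j - a)})" for j
  have Elow: "j \<le> a \<Longrightarrow> E j = i ` F j" for j by (simp add: E_def)
  have Ehigh: "E j = {m \<in> M. p m \<in> H (j - a)}" if "a \<le> j" for j
  proof (cases "j = a")
    case True
    then have "E j = i ` N" using Fk by (simp add: E_def)
    also have "\<dots> = {m \<in> M. p m \<in> H (j - a)}" using ker H0 True by simp
    finally show ?thesis .
  next
    case False
    then show ?thesis using that by (simp add: E_def)
  qed
  show ?thesis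
  proof (rule gr_evenI[where k="a + b" and F=E])
    show "QG_module G scM actM M" by (rule MM)
    show "E 0 = {0}" using Elow[of 0] F0 hom_zero[OF NN hi] by simp
    show "E (a + b) = M" using Ehigh[of "a + b"] Hk QG_homD(1)[OF hp] by auto
    show "QG_module G scM actM (E j)" if "j \<le> a + b" for j
    proof (cases "j \<le> a")
      case True
      then show ?thesis using Elow[OF True] QG_image[OF Fmod[OF True] Fsub[OF True] MM hi] by simp
    next
      case False
      then have "j - a \<le> b" using that by simp
      then show ?thesis using Ehigh[of j] False QG_vimage[OF MM Hmod hp] by simp
    qed
    show "E j \<subseteq> E (Suc j)" if "j < a + b" for j
    proof (cases "Suc j \<le> a")
      case True
      then show ?thesis using Elow[of j] Elow[of "Suc j"] Finc[of j] by auto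
    next
      case False
      then have "a \<le> j" "j - a < b" "Suc j - a = Suc (j - a)" using that by auto
      then show ?thesis using Ehigh[of j] Ehigh[of "Suc j"] Hinc[of "j - a"] by auto
    qed
    show "actM \<iota> m - m \<in> E j" if h: "j < a + b" "m \<in> E (Suc j)" for j m
    proof (cases "Suc j \<le> a")
      case True
      then have j: "j < a" by simp
      obtain n where n: "n \<in> F (Suc j)" "m = i n" using h(2) Elow[OF True] by auto
      have nN: "n \<in> N" using n(1) Fsub[OF True] by auto
      have "actM \<iota> m - m = i (actN \<iota> n - n)"
        using n(2) hom_diff[OF NN hi Nf(5)[OF iota nN] nN] QG_homD(4)[OF hi iota nN] by simp
      moreover have "actN \<iota> n - n \<in> F j" by (rule Fodd[OF j n(1)])
      ultimately show ?thesis using Elow[of j] j by simp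
    next
      case False
      then have aj: "a \<le> j" and jb: "j - a < b" and sj: "Suc j - a = Suc (j - a)" using h(1) by auto
      have m: "m \<in> M" "p m \<in> H (Suc (j - a))" using h(2) Ehigh[of "Suc j"] aj sj by auto
      have "p (actM \<iota> m - m) = actP \<iota> (p m) - p m"
        using hom_diff[OF MM hp Mf(5)[OF iota m(1)] m(1)] QG_homD(4)[OF hp iota m(1)] by simp
      moreover have "actP \<iota> (p m) - p m \<in> H (j - a)" by (rule Hodd[OF jb m(2)])
      moreover have "actM \<iota> m - m \<in> M" using Mf(4)[OF Mf(5)[OF iota m(1)] m(1)] .
      ultimately show ?thesis using Ehigh[OF aj] by simp
    qed
  qed
qed

theorem proposition3p4p2:
  fixes G :: "'g monoid" and \<iota> :: 'g and L :: "'g set"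
  assumes "group G" and "\<iota> \<in> carrier G" and "L \<lhd> G" and "finite L"
    and "\<forall>X\<in>carrier (G Mod L).
           (L #>\<^bsub>G\<^esub> \<iota>) \<otimes>\<^bsub>G Mod L\<^esub> X = X \<otimes>\<^bsub>G Mod L\<^esub> (L #>\<^bsub>G\<^esub> \<iota>)"
  shows
   "(\<forall>(sc::rat \<Rightarrow> 'v::ab_group_add \<Rightarrow> 'v) act M N.
       gr_odd G sc act \<iota> M \<and> N \<subseteq> M \<and> QG_module G sc act N \<longrightarrow> gr_odd G sc act \<iota> N) \<and>
    (\<forall>(sc1::rat \<Rightarrow> 'v1::ab_group_add \<Rightarrow> 'v1) act1 M (sc2::rat \<Rightarrow> 'v2::ab_group_add \<Rightarrow> 'v2) act2 P f.
       gr_odd G sc1 act1 \<iota> M \<and> QG_module G sc2 act2 P \<and> QG_hom G sc1 act1 M sc2 act2 P f \<and>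
       f ` M = P \<longrightarrow> gr_odd G sc2 act2 \<iota> P) \<and>
    (\<forall>(scN::rat \<Rightarrow> 'n::ab_group_add \<Rightarrow> 'n) actN N (scM::rat \<Rightarrow> 'm::ab_group_add \<Rightarrow> 'm) actM M
       (scP::rat \<Rightarrow> 'p::ab_group_add \<Rightarrow> 'p) actP P i p.
       QG_module G scN actN N \<and> QG_module G scM actM M \<and> QG_module G scP actP P \<and>
       QG_hom G scN actN N scM actM M i \<and> inj_on i N \<and>
       QG_hom G scM actM M scP actP P p \<and> p ` M = P \<and> i ` N = {m \<in> M. p m = 0} \<and>
       gr_odd G scN actN \<iota> N \<and> gr_odd G scP actP \<iota> P \<longrightarrow> gr_odd G scM actM \<iota> M) \<and>
    (\<forall>(sc::rat \<Rightarrow> 'v \<Rightarrow> 'v) act M N.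
       gr_even G sc act \<iota> M \<and> N \<subseteq> M \<and> QG_module G sc act N \<longrightarrow> gr_even G sc act \<iota> N) \<and>
    (\<forall>(sc1::rat \<Rightarrow> 'v1 \<Rightarrow> 'v1) act1 M (sc2::rat \<Rightarrow> 'v2 \<Rightarrow> 'v2) act2 P f.
       gr_even G sc1 act1 \<iota> M \<and> QG_module G sc2 act2 P \<and> QG_hom G sc1 act1 M sc2 act2 P f \<and>
       f ` M = P \<longrightarrow> gr_even G sc2 act2 \<iota> P) \<and>
    (\<forall>(scN::rat \<Rightarrow> 'n \<Rightarrow> 'n) actN N (scM::rat \<Rightarrow> 'm \<Rightarrow> 'm) actM M
       (scP::rat \<Rightarrow> 'p \<Rightarrow> 'p) actP P i p.
       QG_module G scN actN N \<and> QG_module G scM actM M \<and> QG_module G scP actP P \<and>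
       QG_hom G scN actN N scM actM M i \<and> inj_on i N \<and>
       QG_hom G scM actM M scP actP P p \<and> p ` M = P \<and> i ` N = {m \<in> M. p m = 0} \<and>
       gr_even G scN actN \<iota> N \<and> gr_even G scP actP \<iota> P \<longrightarrow> gr_even G scM actM \<iota> M)"
proof -
  note io = assms(2)
  show ?thesis
    apply (intro conjI allI impI)
         subgoal by (elim conjE) (rule sub_odd[OF io]; assumption)
        subgoal by (elim conjE) (rule quot_odd[OF io]; assumption)
       subgoal by (elim conjE) (rule ext_odd[OF io]; assumption)
      subgoal by (elim conjE) (rule sub_even[OF io]; assumption)
     subgoal by (elim conjE) (rule quot_even[OF io]; assumption)
    subgoal by (elim conjE) (rule ext_even[OF io]; assumption)
    done
qed

end
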